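(* Let $p$ be a prime number and let $n=p_1^{\alpha_1}\cdots p_r^{\alpha_r}$ ($r\ge 1$) be the prime factorization of an integer $n>1$, with distinct primes $p_i$ and exponents $\alpha_i\ge 1$. Then $n$ is $p$-multiplicatively $e$-perfect (i.e. $T_e(n)=n^p$) if and only if for each $i\in\{1,\dots,r\}$ we have $$\sigma(\alpha_i)=\gcd(\alpha_i,\sigma(\alpha_i))\,p\quad\text{and}\quad \alpha_i=\gcd(\alpha_i,\sigma(\alpha_i))\prod_{j\in\{1,\dots,r\}\setminus\{i\}}d(\alpha_j),$$ with $$2^{r-1}\le \prod_{j\in\{1,\dots,r\}\setminus\{i\}}d(\alpha_j)<p,$$ where the empty product is $1$. In particular, if $r=1$, then $\alpha_1\mid\sigma(\alpha_1)$ and $\sigma(\alpha_1)=\alpha_1 p$.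
   Context: $\sigma(m)$ is the sum and $d(m)$ the number of positive divisors of $m$. For $n=p_1^{a_1}\cdots p_r^{a_r}>1$, a divisor $d=p_1^{b_1}\cdots p_r^{b_r}$ of $n$ is an exponential divisor ($e$-divisor) if $b_i\mid a_i$ for all $i$; $T_e(n)$ denotes the product of all $e$-divisors of $n$. One has $T_e(n)=\prod_{i=1}^r p_i^{\sigma(a_i)\prod_{j\ne i}d(a_j)}$. *)

theory Defs
  imports "HOL-Computational_Algebra.Primes"
begin

definition divisor_sigma :: "nat \<Rightarrow> nat" where
  "divisor_sigma m = (\<Sum>d\<in>{d. d dvd m}. d)"

definition num_divisors :: "nat \<Rightarrow> nat" where
  "num_divisors m = card {d. d dvd m}"

definition e_divisor :: "nat \<Rightarrow> nat \<Rightarrow> bool" where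
  "e_divisor d n \<longleftrightarrow> d dvd n \<and>
     (\<forall>q\<in>prime_factors n. multiplicity q d dvd multiplicity q n)"

definition T_e :: "nat \<Rightarrow> nat" where
  "T_e n = (\<Prod>d\<in>{d. e_divisor d n}. d)"

end

theory Submission
  imports Defs "HOL-Library.FuncSet"
begin

lemma Te_finite: assumes "n > 0" shows "finite {d. e_divisor d n}" "0 \<notin> {d. e_divisor d n}"
proof -
  have "{d. e_divisor d n} \<subseteq> {d. d dvd n}" by (auto simp: e_divisor_def)
  moreover have "finite {d. d dvd n}" using assms by (simp add: finite_divisors_nat)
  ultimately show "finite {d. e_divisor d n}" by (rule finite_subset)
  show "0 \<notin> {d. e_divisor d n}" using assms by (auto simp: e_divisor_def)
qed

lemma sum_PiE_coord:
  fixes S :: "'a \<Rightarrow> nat set"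
  assumes "finite P" "\<And>j. j \<in> P \<Longrightarrow> finite (S j)" "q \<in> P"
  shows "(\<Sum>b\<in>PiE P S. b q) = (\<Sum>y\<in>S q. y) * (\<Prod>j\<in>P - {q}. card (S j))"
proof -
  have "(\<Sum>b\<in>PiE P S. b q) = (\<Sum>b\<in>PiE P S. \<Prod>j\<in>P. (if j = q then b j else 1))"
    using assms by (intro sum.cong refl) (simp add: prod.delta)
  also have "\<dots> = (\<Prod>j\<in>P. \<Sum>y\<in>S j. (if j = q then y else 1))"
    using assms by (subst prod_sum_PiE) auto
  also have "\<dots> = (\<Sum>y\<in>S q. y) * (\<Prod>j\<in>P - {q}. \<Sum>y\<in>S j. (if j = q then y else 1))"
    using assms by (subst prod.remove[of P q]) auto
  also have "(\<Prod>j\<in>P - {q}. \<Sum>y\<in>S j. (if j = q then y else 1)) = (\<Prod>j\<in>P - {q}. card (S j))"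
    by (intro prod.cong refl) auto
  finally show ?thesis by simp
qed

lemma Te_mult:
  fixes n q :: nat
  assumes "n > 0" "prime q"
  shows "multiplicity q (T_e n) = (if q \<in> prime_factors n then divisor_sigma (multiplicity q n) *
     (\<Prod>j\<in>prime_factors n - {q}. num_divisors (multiplicity j n)) else 0)"
proof -
  define P where "P = prime_factors n"
  define E where "E = {d. e_divisor d n}"
  define S where "S = (\<lambda>j. {k. k dvd multiplicity j n})"
  define \<phi> where "\<phi> = (\<lambda>d::nat. restrict (\<lambda>j. multiplicity j d) P)"
  have fE: "finite E" and E0: "0 \<notin> E" using Te_finite[OF assms(1)] by (auto simp: E_def)
  have Ediv: "d dvd n" if "d \<in> E" for d using that by (auto simp: E_def e_divisor_def)
  have mult_sum: "multiplicity q (T_e n) = (\<Sum>d\<in>E. multiplicity q d)"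
    unfolding T_e_def E_def[symmetric] using fE E0 assms
    by (subst prime_elem_multiplicity_prod_distrib) auto
  show ?thesis
  proof (cases "q \<in> P")
    case False
    have "multiplicity q d = 0" if "d \<in> E" for d
    proof -
      have "multiplicity q d \<le> multiplicity q n"
        using Ediv[OF that] assms by (intro dvd_imp_multiplicity_le) auto
      moreover have "multiplicity q n = 0" using False assms
        by (auto simp: P_def prime_factors_multiplicity)
      ultimately show ?thesis by simp
    qed
    then show ?thesis using mult_sum False by (simp add: P_def)
  next
    case True
    have fP: "finite P" by (simp add: P_def)
    have Pprime: "prime j" if "j \<in> P" for j using that by (auto simp: P_def)
    have apos: "multiplicity j n > 0" if "j \<in> P" for j
      using that assms by (auto simp: P_def prime_factors_multiplicity)
    have fS: "finite (S j)" if "j \<in> P" for j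
      using apos[OF that] by (simp add: S_def finite_divisors_nat)
    have bij: "bij_betw \<phi> E (PiE P S)"
    proof (rule bij_betwI')
      fix d1 d2 assume d: "d1 \<in> E" "d2 \<in> E"
      show "(\<phi> d1 = \<phi> d2) = (d1 = d2)"
      proof
        assume eq: "\<phi> d1 = \<phi> d2"
        show "d1 = d2"
        proof (rule multiplicity_eq_nat)
          show "d1 > 0" "d2 > 0" using d E0 by (auto intro: Nat.gr0I)
          fix r :: nat assume r: "prime r"
          show "multiplicity r d1 = multiplicity r d2"
          proof (cases "r \<in> P")
            case True
            then show ?thesis using fun_cong[OF eq, of r] by (simp add: \<phi>_def)
          next
            case False
            have "multiplicity r n = 0" using False assms r
              by (auto simp: P_def prime_factors_multiplicity)
            moreover have "multiplicity r d1 \<le> multiplicity r n" "multiplicity r d2 \<le> multiplicity r n"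
              using Ediv d assms by (auto intro: dvd_imp_multiplicity_le)
            ultimately show ?thesis by simp
          qed
        qed
      qed simp
    next
      fix d assume "d \<in> E"
      then show "\<phi> d \<in> PiE P S"
        by (auto simp: \<phi>_def S_def E_def e_divisor_def P_def)
    next
      fix b assume b: "b \<in> PiE P S"
      define d where "d = (\<Prod>j\<in>P. j ^ b j)"
      have md: "multiplicity r d = (if r \<in> P then b r else 0)" if "prime r" for r
        unfolding d_def using fP Pprime that by (rule multiplicity_prod_prime_powers)
      have d0: "d \<noteq> 0" unfolding d_def using Pprime by (auto simp: prime_gt_0_nat intro!: prod_pos)
      have ble: "b j \<le> multiplicity j n" if "j \<in> P" for j
        using b that apos[OF that] by (auto simp: S_def PiE_def Pi_def intro: dvd_imp_le)
      have "d dvd n"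
      proof (rule multiplicity_le_imp_dvd[OF d0])
        fix r :: nat assume "prime r" then show "multiplicity r d \<le> multiplicity r n"
          using md ble by auto
      qed
      moreover have "\<forall>r\<in>prime_factors n. multiplicity r d dvd multiplicity r n"
        using md b Pprime by (auto simp: P_def S_def PiE_def Pi_def)
      ultimately have "d \<in> E" by (simp add: E_def e_divisor_def)
      moreover have "b = \<phi> d"
      proof
        fix j show "b j = \<phi> d j"
          using b md Pprime by (cases "j \<in> P") (auto simp: \<phi>_def PiE_def extensional_def)
      qed
      ultimately show "\<exists>d\<in>E. b = \<phi> d" by blast
    qed
    have "(\<Sum>d\<in>E. multiplicity q d) = (\<Sum>d\<in>E. \<phi> d q)"
      using True by (simp add: \<phi>_def)
    also have "\<dots> = (\<Sum>b\<in>PiE P S. b q)"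
      using bij by (rule sum.reindex_bij_betw)
    also have "\<dots> = (\<Sum>y\<in>S q. y) * (\<Prod>j\<in>P - {q}. card (S j))"
      using fP fS True by (rule sum_PiE_coord)
    finally show ?thesis using mult_sum True
      by (simp add: P_def S_def divisor_sigma_def num_divisors_def)
  qed
qed

lemma sigma_one: "divisor_sigma 1 = 1" "num_divisors 1 = 1" "divisor_sigma (Suc 0) = 1" "num_divisors (Suc 0) = 1"
  by (simp_all add: divisor_sigma_def num_divisors_def)

lemma sigma_gt: assumes "m \<ge> 2" shows "divisor_sigma m > m"
proof -
  have f: "finite {d. d dvd m}" using assms by (simp add: finite_divisors_nat)
  have "(\<Sum>d\<in>{1,m}. d) \<le> (\<Sum>d\<in>{d. d dvd m}. d)"
    by (rule sum_mono2[OF f]) auto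
  moreover have "(\<Sum>d\<in>{1,m}. d) = m + 1" using assms by simp
  ultimately show ?thesis by (simp add: divisor_sigma_def)
qed

lemma numdiv_ge: assumes "m \<ge> 2" shows "num_divisors m \<ge> 2"
proof -
  have f: "finite {d. d dvd m}" using assms by (simp add: finite_divisors_nat)
  have "card {1,m} \<le> card {d. d dvd m}" by (rule card_mono[OF f]) auto
  moreover have "card {1, m} = 2" using assms by simp
  ultimately show ?thesis by (simp add: num_divisors_def)
qed

lemma sigma_lt: assumes "m \<ge> 2" shows "divisor_sigma m < m * num_divisors m"
proof -
  have f: "finite {d. d dvd m}" using assms by (simp add: finite_divisors_nat)
  have "(\<Sum>d\<in>{d. d dvd m}. d) < (\<Sum>d\<in>{d. d dvd m}. m)"
  proof (rule sum_strict_mono_ex1[OF f])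
    show "\<forall>x\<in>{d. d dvd m}. x \<le> m" using assms by (auto intro: dvd_imp_le)
    show "\<exists>a\<in>{d. d dvd m}. a < m" using assms by (intro bexI[of _ 1]) auto
  qed
  then show ?thesis by (simp add: divisor_sigma_def num_divisors_def mult.commute)
qed

lemma local_equiv:
  fixes a s D p :: nat
  assumes "prime p" "a \<ge> 2" "s = divisor_sigma a"
  shows "s * D = a * p \<longleftrightarrow> (s = gcd a s * p \<and> a = gcd a s * D \<and> D < p)"
proof
  assume eq: "s * D = a * p"
  have sa: "s > a" using sigma_gt[OF assms(2)] assms(3) by simp
  define g where "g = gcd a s"
  have g0: "g \<noteq> 0" using assms by (simp add: g_def)
  obtain t s' where ts: "a = t * g" "s = s' * g" "coprime t s'"
    using gcd_coprime_exists[OF g0[unfolded g_def]] unfolding g_def by blast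
  have "s' * D = t * p" using eq ts g0 by (metis mult.assoc mult.commute mult_left_cancel)
  hence "s' dvd t * p" by (metis dvd_triv_left)
  hence "s' dvd p" using ts(3) by (metis coprime_commute coprime_dvd_mult_right_iff)
  hence "s' = 1 \<or> s' = p" using assms(1) by (simp add: prime_nat_iff)
  moreover have "s' \<noteq> 1"
  proof
    assume "s' = 1"
    hence "s = g" using ts by simp
    moreover have "g \<le> a" using assms(2) unfolding g_def by (intro gcd_le1_nat) simp
    ultimately have "s \<le> a" by simp
    with sa show False by simp
  qed
  ultimately have sp: "s' = p" by simp
  have "D = t" using \<open>s' * D = t * p\<close> sp prime_gt_0_nat[OF assms(1)] by simp
  moreover have "D < p"
  proof -
    have "t * g < p * g" using sa ts sp by simp
    thus ?thesis using \<open>D = t\<close> by simp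
  qed
  moreover have "s = g * p" using ts sp by simp
  moreover have "a = g * D" using ts \<open>D = t\<close> by simp
  ultimately show "s = gcd a s * p \<and> a = gcd a s * D \<and> D < p"
    unfolding g_def by blast
next
  assume H: "s = gcd a s * p \<and> a = gcd a s * D \<and> D < p"
  have aux: "s1 * D1 = a1 * p1" if "s1 = g1 * p1" "a1 = g1 * D1" for s1 g1 p1 a1 D1 :: nat
    using that by simp
  show "s * D = a * p" using aux[of s "gcd a s" p a D] H by blast
qed

theorem mainTheorem4:
  fixes p n :: nat
  assumes "prime p" and "n > 1"
  shows "(T_e n = n ^ p \<longleftrightarrow>
          (\<forall>i\<in>prime_factors n.
             divisor_sigma (multiplicity i n) =
               gcd (multiplicity i n) (divisor_sigma (multiplicity i n)) * p \<and>
             multiplicity i n =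
               gcd (multiplicity i n) (divisor_sigma (multiplicity i n)) *
               (\<Prod>j\<in>prime_factors n - {i}. num_divisors (multiplicity j n)) \<and>
             2 ^ (card (prime_factors n) - 1)
               \<le> (\<Prod>j\<in>prime_factors n - {i}. num_divisors (multiplicity j n)) \<and>
             (\<Prod>j\<in>prime_factors n - {i}. num_divisors (multiplicity j n)) < p))
       \<and> (card (prime_factors n) = 1 \<longrightarrow> T_e n = n ^ p \<longrightarrow>
          (\<forall>i\<in>prime_factors n.
             multiplicity i n dvd divisor_sigma (multiplicity i n) \<and>
             divisor_sigma (multiplicity i n) = multiplicity i n * p))"
proof -
  define P where "P = prime_factors n"
  define a where "a = (\<lambda>j. multiplicity j n)"
  define D where "D = (\<lambda>i. \<Prod>j\<in>P - {i}. num_divisors (a j))"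
  have n0: "n > 0" using assms by simp
  have fP: "finite P" by (simp add: P_def)
  have Pprime: "prime j" if "j \<in> P" for j using that by (auto simp: P_def)
  have apos: "a j \<ge> 1" if "j \<in> P" for j
    using that n0 by (auto simp: P_def a_def prime_factors_multiplicity Suc_le_eq)
  have Te0: "T_e n > 0"
    using Te_finite[OF n0] unfolding T_e_def by (auto intro!: prod_pos Nat.gr0I)
  have multTe: "multiplicity q (T_e n) = (if q \<in> P then divisor_sigma (a q) * D q else 0)"
    if "prime q" for q
    using Te_mult[OF n0 that] by (simp add: P_def a_def D_def)
  have multN: "multiplicity q (n ^ p) = p * a q" if "prime q" for q
    using that n0 by (simp add: prime_elem_multiplicity_power_distrib a_def)
  have A0: "q \<notin> P \<Longrightarrow> prime q \<Longrightarrow> a q = 0" for q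
    using n0 by (auto simp: P_def a_def prime_factors_multiplicity)
  have stepA: "T_e n = n ^ p \<longleftrightarrow> (\<forall>i\<in>P. divisor_sigma (a i) * D i = a i * p)"
  proof
    assume "T_e n = n ^ p"
    then show "\<forall>i\<in>P. divisor_sigma (a i) * D i = a i * p"
      using multTe multN Pprime by (metis mult.commute)
  next
    assume H: "\<forall>i\<in>P. divisor_sigma (a i) * D i = a i * p"
    show "T_e n = n ^ p"
    proof (rule multiplicity_eq_nat)
      show "T_e n > 0" "n ^ p > 0" using Te0 n0 by auto
      fix q :: nat assume q: "prime q"
      show "multiplicity q (T_e n) = multiplicity q (n ^ p)"
        using H multTe[OF q] multN[OF q] A0[OF _ q] by (cases "q \<in> P") (auto simp: mult.commute)
    qed
  qed
  have all2: "\<forall>i\<in>P. a i \<ge> 2" if H: "\<forall>i\<in>P. divisor_sigma (a i) * D i = a i * p"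
  proof (rule ccontr)
    assume "\<not> (\<forall>i\<in>P. a i \<ge> 2)"
    then obtain i where i: "i \<in> P" "a i = 1" using apos by fastforce
    have "divisor_sigma (a i) * D i = a i * p" using H i(1) by blast
    hence Di: "D i = p" using i(2) by (simp add: sigma_one)
    define N where "N = (\<Prod>j\<in>P. num_divisors (a j))"
    have Nsplit: "N = num_divisors (a j) * D j" if "j \<in> P" for j
      unfolding N_def D_def using fP that by (rule prod.remove)
    have Np: "N = p" using Nsplit[OF i(1)] Di i by (simp add: sigma_one)
    have "\<exists>k\<in>P. a k \<ge> 2"
    proof (rule ccontr)
      assume "\<not> (\<exists>k\<in>P. a k \<ge> 2)"
      hence "\<forall>k\<in>P. a k = 1" using apos by fastforce
      hence "N = 1" unfolding N_def by (simp add: sigma_one)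
      thus False using Np assms(1) by simp
    qed
    then obtain k where k: "k \<in> P" "a k \<ge> 2" by blast
    have "num_divisors (a k) dvd p" using Nsplit[OF k(1)] Np by (metis dvd_triv_left)
    moreover have "num_divisors (a k) \<ge> 2" using numdiv_ge[OF k(2)] .
    ultimately have dk: "num_divisors (a k) = p" using assms(1) by (auto simp: prime_nat_iff)
    hence "D k = 1" using Nsplit[OF k(1)] Np prime_gt_0_nat[OF assms(1)] by simp
    moreover have "divisor_sigma (a k) * D k = a k * p" using H k(1) by blast
    ultimately have "divisor_sigma (a k) = a k * num_divisors (a k)" using dk by simp
    with sigma_lt[OF k(2)] show False by simp
  qed
  have stepB: "(\<forall>i\<in>P. divisor_sigma (a i) * D i = a i * p) \<longleftrightarrow>
     (\<forall>i\<in>P. divisor_sigma (a i) = gcd (a i) (divisor_sigma (a i)) * p \<and>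
             a i = gcd (a i) (divisor_sigma (a i)) * D i \<and>
             2 ^ (card P - 1) \<le> D i \<and> D i < p)"
  proof
    assume H: "\<forall>i\<in>P. divisor_sigma (a i) * D i = a i * p"
    have a2: "\<forall>i\<in>P. a i \<ge> 2" using all2[OF H] .
    show "\<forall>i\<in>P. divisor_sigma (a i) = gcd (a i) (divisor_sigma (a i)) * p \<and>
             a i = gcd (a i) (divisor_sigma (a i)) * D i \<and>
             2 ^ (card P - 1) \<le> D i \<and> D i < p"
    proof
      fix i assume i: "i \<in> P"
      have L: "divisor_sigma (a i) = gcd (a i) (divisor_sigma (a i)) * p \<and>
             a i = gcd (a i) (divisor_sigma (a i)) * D i \<and> D i < p"
        using local_equiv[OF assms(1) a2[rule_format, OF i] refl, of "D i"] H i by blast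
      have "(\<Prod>j\<in>P - {i}. (2::nat)) \<le> D i"
        unfolding D_def using a2 by (intro prod_mono) (auto intro: numdiv_ge)
      moreover have "(\<Prod>j\<in>P - {i}. (2::nat)) = 2 ^ (card P - 1)"
        using fP i by (simp add: card_Diff_singleton)
      ultimately show "divisor_sigma (a i) = gcd (a i) (divisor_sigma (a i)) * p \<and>
             a i = gcd (a i) (divisor_sigma (a i)) * D i \<and>
             2 ^ (card P - 1) \<le> D i \<and> D i < p" using L by simp
    qed
  next
    assume H: "\<forall>i\<in>P. divisor_sigma (a i) = gcd (a i) (divisor_sigma (a i)) * p \<and>
             a i = gcd (a i) (divisor_sigma (a i)) * D i \<and>
             2 ^ (card P - 1) \<le> D i \<and> D i < p"
    have aux: "s1 * D1 = a1 * p1" if "s1 = g1 * p1" "a1 = g1 * D1" for s1 g1 p1 a1 D1 :: nat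
      using that by simp
    show "\<forall>i\<in>P. divisor_sigma (a i) * D i = a i * p"
    proof
      fix i assume "i \<in> P"
      then show "divisor_sigma (a i) * D i = a i * p"
        using aux[of "divisor_sigma (a i)" "gcd (a i) (divisor_sigma (a i))" p "a i" "D i"] H by blast
    qed
  qed
  have part1: "T_e n = n ^ p \<longleftrightarrow>
     (\<forall>i\<in>P. divisor_sigma (a i) = gcd (a i) (divisor_sigma (a i)) * p \<and>
             a i = gcd (a i) (divisor_sigma (a i)) * D i \<and>
             2 ^ (card P - 1) \<le> D i \<and> D i < p)"
    using stepA stepB by blast
  have part2: "\<forall>i\<in>P. a i dvd divisor_sigma (a i) \<and> divisor_sigma (a i) = a i * p"
    if c1: "card P = 1" and T: "T_e n = n ^ p"
  proof
    fix i assume i: "i \<in> P"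
    have "P = {i}" using c1 i by (metis card_1_singletonE singletonD)
    hence D1: "D i = 1" by (simp add: D_def)
    have R: "divisor_sigma (a i) = gcd (a i) (divisor_sigma (a i)) * p \<and>
             a i = gcd (a i) (divisor_sigma (a i)) * D i"
      using part1 T i by blast
    hence ag: "a i = gcd (a i) (divisor_sigma (a i))" using D1 by simp
    have "a i dvd divisor_sigma (a i)" by (subst ag) (rule gcd_dvd2)
    moreover have "divisor_sigma (a i) = a i * p" using R ag by metis
    ultimately show "a i dvd divisor_sigma (a i) \<and> divisor_sigma (a i) = a i * p" by blast
  qed
  show ?thesis using part1 part2 unfolding P_def a_def D_def by blast
qed

end
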